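(* Let $\Sigma$ be an alphabet and $R'\subseteq R\subseteq\Sigma^*\times\Sigma^*$. Let $P$ be a finite derivational proof in $\langle\Sigma\mid R'\rangle$. If $P\models R$ and the derivation graph $\Gamma_D(P)$ is acyclic, then there exists a sequence of exactly $|R\setminus R'|$ $\mathbf{Rel}(+)$ transformations between $\langle\Sigma\mid R'\rangle$ and $\langle\Sigma\mid R\rangle$.
   Context: For an alphabet $\Sigma$, $\Sigma^*$ is the free monoid of words. For $S\subseteq\Sigma^*\times\Sigma^*$, $\langle\Sigma\mid S\rangle$ is the quotient of $\Sigma^*$ by the congruence generated by $S$; for words $u,v$ and $(q,r)\in\Sigma^*\times\Sigma^*$ we write $u\xrightarrow{(q,r)}v$ if $u=sqt$ and $v=srt$ for some words $s,t$; $u\sim_Sv$ means $u$ is transformed into $v$ by finitely many steps $\xrightarrow{\rho}$ or their reverses with $\rho\in S$. A $\mathbf{Rel}(+)$ transformation passes from $\langle\Sigma\mid S\rangle$ to $\langle\Sigma\mid S\cup\{(q,r)\}\rangle$ where $q\sim_Sr$; a sequence of $m$ such transformations between two presentations is a chain of $m+1$ presentations from the first to the second, each obtained from the previous by one such transformation. Let $L(\Sigma)=\mathbb{N}\times(\Sigma^*\times\Sigma^* )$ (labels). A derivational proof in $\langle\Sigma\mid R'\rangle$ is a set $P\subseteq L(\Sigma)\times(L(\Sigma)\cup R')^*$ such that: (indexed) distinct elements of $P$ have distinct labels; (well-founded) for every $(\ell,d)\in P$ and every letter $d_k$ of $d$, either $d_k\in R'$, or $d_k\in L(\Sigma)$ and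 $(d_k,d')\in P$ for some $d'$; (valid) for every $(\ell,d)\in P$ with $\ell=(n,(w,w'))$ and $m=|d|$ there are words $v_1,\dots,v_{m+1}$ with $v_1=w$, $v_{m+1}=w'$ and, for each $k\le m$, $v_k\xrightarrow{d_k}v_{k+1}$ if $d_k\in R'$, and $v_k\xrightarrow{r}v_{k+1}$ if $d_k=(n',r)\in L(\Sigma)$. We write $P\models R$ if $R\subseteq R'\cup\{r\mid((n,r),d)\in P\}$. The derivation graph $\Gamma_D(P)$ has as vertices the labels $\ell$ with $(\ell,d)\in P$, and an edge $(\ell,\ell')$ whenever $\ell'$ occurs as a letter of $d$ for some $(\ell,d)\in P$. A directed graph is acyclic if it has no directed path of positive length from a vertex to itself. *)

theory Defs
  imports Main
begin

text \<open>The alphabet \<Sigma> is the type 'a; words are lists; relations are sets of pairs of words.\<close>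

type_synonym 'a word = "'a list"
type_synonym 'a rel_pair = "'a word \<times> 'a word"
type_synonym 'a label = "nat \<times> 'a rel_pair"

definition rstep :: "'a rel_pair \<Rightarrow> 'a word \<Rightarrow> 'a word \<Rightarrow> bool" where
  "rstep \<rho> u v \<longleftrightarrow> (\<exists>s t. u = s @ fst \<rho> @ t \<and> v = s @ snd \<rho> @ t)"

definition pres_equiv :: "'a rel_pair set \<Rightarrow> 'a word \<Rightarrow> 'a word \<Rightarrow> bool" where
  "pres_equiv S = (\<lambda>u v. \<exists>\<rho>\<in>S. rstep \<rho> u v \<or> rstep \<rho> v u)\<^sup>*\<^sup>*"

definition rel_plus :: "'a rel_pair set \<Rightarrow> 'a rel_pair set \<Rightarrow> bool" where
  "rel_plus S S' \<longleftrightarrow> (\<exists>q r. pres_equiv S q r \<and> S' = S \<union> {(q, r)})"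

definition rel_plus_seq :: "nat \<Rightarrow> 'a rel_pair set \<Rightarrow> 'a rel_pair set \<Rightarrow> bool" where
  "rel_plus_seq m S T \<longleftrightarrow>
     (\<exists>f :: nat \<Rightarrow> 'a rel_pair set. f 0 = S \<and> f m = T \<and> (\<forall>i<m. rel_plus (f i) (f (Suc i))))"

text \<open>Letters of a derivation are from L(\<Sigma>) \<union> R', encoded as a sum type:
  Inl for labels, Inr for relations (which must lie in R').\<close>
type_synonym 'a letter = "'a label + 'a rel_pair"

definition letter_rel :: "'a letter \<Rightarrow> 'a rel_pair" where
  "letter_rel x = (case x of Inl (n', r) \<Rightarrow> r | Inr \<rho> \<Rightarrow> \<rho>)"

definition derivational_proof ::
  "'a rel_pair set \<Rightarrow> ('a label \<times> 'a letter list) set \<Rightarrow> bool" where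
  "derivational_proof R' P \<longleftrightarrow>
     \<comment> \<open>indexed\<close>
     (\<forall>p\<in>P. \<forall>p'\<in>P. fst p = fst p' \<longrightarrow> p = p') \<and>
     \<comment> \<open>well-founded\<close>
     (\<forall>(l, d)\<in>P. \<forall>x\<in>set d.
        (case x of Inr \<rho> \<Rightarrow> \<rho> \<in> R' | Inl l' \<Rightarrow> (\<exists>d'. (l', d') \<in> P))) \<and>
     \<comment> \<open>valid\<close>
     (\<forall>(l, d)\<in>P. \<exists>v :: nat \<Rightarrow> 'a word.
        v 0 = fst (snd l) \<and> v (length d) = snd (snd l) \<and>
        (\<forall>k<length d. rstep (letter_rel (d ! k)) (v k) (v (Suc k))))"

definition proof_models ::
  "'a rel_pair set \<Rightarrow> ('a label \<times> 'a letter list) set \<Rightarrow> 'a rel_pair set \<Rightarrow> bool" where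
  "proof_models R' P R \<longleftrightarrow> R \<subseteq> R' \<union> {r. \<exists>n d. ((n, r), d) \<in> P}"

definition derivation_graph :: "('a label \<times> 'a letter list) set \<Rightarrow> ('a label \<times> 'a label) set" where
  "derivation_graph P = {(l, l'). \<exists>d. (l, d) \<in> P \<and> Inl l' \<in> set d}"

end

theory Submission
  imports Defs
begin

lemma rstep_ctx: "rstep \<rho> u v \<Longrightarrow> rstep \<rho> (s @ u @ t) (s @ v @ t)"
  unfolding rstep_def by (metis append.assoc)

lemma pres_equiv_step: "\<rho> \<in> S \<Longrightarrow> rstep \<rho> u v \<Longrightarrow> pres_equiv S u v"
  unfolding pres_equiv_def by (rule r_into_rtranclp) blast

lemma pres_equiv_ctx:
  assumes "pres_equiv S u v" shows "pres_equiv S (s @ u @ t) (s @ v @ t)"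
  using assms unfolding pres_equiv_def
proof (induction rule: rtranclp_induct)
  case base then show ?case by simp
next
  case (step y z)
  have "(\<lambda>u v. \<exists>\<rho>\<in>S. rstep \<rho> u v \<or> rstep \<rho> v u) (s @ y @ t) (s @ z @ t)"
    using step(2) rstep_ctx by blast
  with step(3) show ?case by (rule rtranclp.rtrancl_into_rtrancl)
qed

lemma pres_equiv_trans: "pres_equiv S u v \<Longrightarrow> pres_equiv S v w \<Longrightarrow> pres_equiv S u w"
  unfolding pres_equiv_def by (rule rtranclp_trans)

lemma pres_equiv_refl: "pres_equiv S u u"
  unfolding pres_equiv_def by simp

lemma pres_equiv_mono:
  assumes "S \<subseteq> T" "pres_equiv S u v" shows "pres_equiv T u v"
  using assms(2) unfolding pres_equiv_def
  by (rule rtranclp_mono[THEN predicate2D, rotated]) (use assms(1) in blast)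

lemma pres_equiv_rstep_equiv:
  assumes "pres_equiv S (fst \<rho>) (snd \<rho>)" "rstep \<rho> u v" shows "pres_equiv S u v"
proof -
  obtain s t where "u = s @ fst \<rho> @ t" "v = s @ snd \<rho> @ t" using assms(2) unfolding rstep_def by blast
  then show ?thesis using pres_equiv_ctx[OF assms(1)] by simp
qed

lemma chain_equiv:
  assumes "\<forall>k<n. pres_equiv S (v k) (v (Suc k))"
  shows "pres_equiv S (v 0) (v n)"
  using assms
proof (induction n)
  case 0 then show ?case by (simp add: pres_equiv_refl)
next
  case (Suc n) then show ?case using pres_equiv_trans by (metis less_Suc_eq)
qed

lemma labels_equiv:
  fixes R' :: "'a rel_pair set" and P :: "('a label \<times> 'a letter list) set"
  assumes fin: "finite P" and dp: "derivational_proof R' P"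
    and acy: "acyclic (derivation_graph P)"
  shows "(l, d) \<in> P \<Longrightarrow> pres_equiv R' (fst (snd l)) (snd (snd l))"
proof -
  let ?G = "derivation_graph P"
  have wf_cl: "\<forall>(l, d)\<in>P. \<forall>x\<in>set d.
        (case x of Inr \<rho> \<Rightarrow> \<rho> \<in> R' | Inl l' \<Rightarrow> (\<exists>d'. (l', d') \<in> P))"
    and val: "\<forall>(l, d)\<in>P. \<exists>v :: nat \<Rightarrow> 'a word.
        v 0 = fst (snd l) \<and> v (length d) = snd (snd l) \<and>
        (\<forall>k<length d. rstep (letter_rel (d ! k)) (v k) (v (Suc k)))"
    using dp unfolding derivational_proof_def by auto
  have sub: "?G \<subseteq> fst ` P \<times> fst ` P"
  proof
    fix x assume "x \<in> ?G"
    then obtain a b d where x: "x = (a, b)" "(a, d) \<in> P" "Inl b \<in> set d"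
      unfolding derivation_graph_def by auto
    then obtain d' where "(b, d') \<in> P" using wf_cl by fastforce
    with x show "x \<in> fst ` P \<times> fst ` P" by force
  qed
  have "finite ?G" using fin sub by (meson finite_subset finite_SigmaI finite_imageI)
  then have wf: "wf (?G\<inverse>)" using acy by (rule finite_acyclic_wf_converse)
  have "\<forall>d. (l, d) \<in> P \<longrightarrow> pres_equiv R' (fst (snd l)) (snd (snd l))"
  proof (induction l rule: wf_induct[OF wf])
    case (1 l)
    show ?case
    proof (intro allI impI)
      fix d assume ld: "(l, d) \<in> P"
      then obtain v where v: "v 0 = fst (snd l)" "v (length d) = snd (snd l)"
        "\<forall>k<length d. rstep (letter_rel (d ! k)) (v k) (v (Suc k))"
        using val by fastforce
      have "\<forall>k<length d. pres_equiv R' (v k) (v (Suc k))"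
      proof (intro allI impI)
        fix k assume k: "k < length d"
        have mem: "d ! k \<in> set d" using k by simp
        have cl: "case d ! k of Inr \<rho> \<Rightarrow> \<rho> \<in> R' | Inl l' \<Rightarrow> (\<exists>d'. (l', d') \<in> P)"
          using bspec[OF wf_cl ld] mem by simp
        have st: "rstep (letter_rel (d ! k)) (v k) (v (Suc k))" using v(3) k by blast
        show "pres_equiv R' (v k) (v (Suc k))"
        proof (cases "d ! k")
          case (Inr \<rho>)
          then have "\<rho> \<in> R'" using cl by simp
          moreover have "rstep \<rho> (v k) (v (Suc k))" using st Inr by (simp add: letter_rel_def)
          ultimately show ?thesis by (rule pres_equiv_step)
        next
          case (Inl l')
          obtain n' r where l': "l' = (n', r)" by (cases l')
          obtain d' where d': "(l', d') \<in> P" using cl Inl by auto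
          have "(l, l') \<in> ?G" using ld mem Inl unfolding derivation_graph_def by auto
          then have "pres_equiv R' (fst (snd l')) (snd (snd l'))" using 1 d' by blast
          moreover have "rstep r (v k) (v (Suc k))" using st Inl l' by (simp add: letter_rel_def)
          ultimately show ?thesis using l' pres_equiv_rstep_equiv by simp
        qed
      qed
      then show "pres_equiv R' (fst (snd l)) (snd (snd l))"
        using chain_equiv v(1,2) by metis
    qed
  qed
  then show "(l, d) \<in> P \<Longrightarrow> pres_equiv R' (fst (snd l)) (snd (snd l))" by blast
qed

theorem theorem9:
  fixes R' R :: "'a rel_pair set" and P :: "('a label \<times> 'a letter list) set"
  assumes "R' \<subseteq> R"
    and "finite P"
    and "derivational_proof R' P"
    and "proof_models R' P R"
    and "acyclic (derivation_graph P)"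
  shows "rel_plus_seq (card (R - R')) R' R"
proof -
  have sub: "R - R' \<subseteq> (\<lambda>p. snd (fst p)) ` P"
    using assms(4) unfolding proof_models_def by force
  have fin: "finite (R - R')" using assms(2) sub by (meson finite_subset finite_imageI)
  have eq: "\<And>r. r \<in> R - R' \<Longrightarrow> pres_equiv R' (fst r) (snd r)"
  proof -
    fix r assume "r \<in> R - R'"
    then obtain n d where "((n, r), d) \<in> P" using assms(4) unfolding proof_models_def by blast
    from labels_equiv[OF assms(2,3,5) this] show "pres_equiv R' (fst r) (snd r)" by simp
  qed
  obtain xs where xs: "set xs = R - R'" "distinct xs" using fin finite_distinct_list by blast
  have len: "length xs = card (R - R')" using xs distinct_card by fastforce
  define f where "f i = R' \<union> set (take i xs)" for i
  have "f 0 = R'" by (simp add: f_def)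
  moreover have "f (length xs) = R" using xs(1) assms(1) by (auto simp: f_def)
  moreover have "\<forall>i<length xs. rel_plus (f i) (f (Suc i))"
  proof (intro allI impI)
    fix i assume i: "i < length xs"
    have "xs ! i \<in> R - R'" using i xs(1) by auto
    then have "pres_equiv R' (fst (xs ! i)) (snd (xs ! i))" by (rule eq)
    then have "pres_equiv (f i) (fst (xs ! i)) (snd (xs ! i))"
      by (rule pres_equiv_mono[rotated]) (simp add: f_def)
    moreover have "f (Suc i) = f i \<union> {(fst (xs ! i), snd (xs ! i))}"
      using i by (auto simp: f_def take_Suc_conv_app_nth)
    ultimately show "rel_plus (f i) (f (Suc i))" unfolding rel_plus_def by blast
  qed
  ultimately show ?thesis unfolding rel_plus_seq_def len[symmetric] by blast
qed

end
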